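(* In a finite $(3+1)$-free poset $P$, every top of a tangle is matched to exactly one bottom of a tangle, and every bottom of a tangle is matched to exactly one top of a tangle. That is, the matching relation is a perfect matching between the tops of tangles and the bottoms of tangles of $P$.
   Context: A poset $P$ is $(3+1)$-free if there are no $a,b,c,d\in P$ with $a<b<c$ and $d$ incomparable to each of $a,b,c$. For $a\in P$ let $D_a=\{x\in P:x<a\}$, $U_a=\{x\in P:x>a\}$. Write $a\mathrel{\top}b$ if neither of $D_a,D_b$ contains the other, and $a\mathrel{\bot}b$ if neither of $U_a,U_b$ contains the other. A top of a tangle is a subset $A\subseteq P$ with $|A|\ge 2$ which is a connected component of the graph on vertex set $P$ whose edges are the pairs $\{a,b\}$ with $a\mathrel{\top}b$; a bottom of a tangle is a subset $B\subseteq P$ with $|B|\ge2$ which is a connected component of the analogous graph for $\bot$. A top of a tangle $A$ and a bottom of a tangle $B$ are matched if there exist distinct $a_1,a_2\in A$ and $b_1,b_2\in B$ with $b_1<a_1$, $b_2<a_2$, and each of the pairs $\{a_1,a_2\},\{b_1,b_2\},\{b_1,a_2\},\{b_2,a_1\}$ incomparable (an induced $(2+2)$ subposet with top vertices in $A$ and bottom vertices in $B$). *)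

theory Defs
  imports Main
begin

definition strict_poset :: "'a set \<Rightarrow> ('a \<Rightarrow> 'a \<Rightarrow> bool) \<Rightarrow> bool" where
  "strict_poset P lt \<longleftrightarrow>
     (\<forall>x\<in>P. \<not> lt x x) \<and>
     (\<forall>x\<in>P. \<forall>y\<in>P. \<forall>z\<in>P. lt x y \<longrightarrow> lt y z \<longrightarrow> lt x z)"

definition incomp :: "('a \<Rightarrow> 'a \<Rightarrow> bool) \<Rightarrow> 'a \<Rightarrow> 'a \<Rightarrow> bool" where
  "incomp lt x y \<longleftrightarrow> x \<noteq> y \<and> \<not> lt x y \<and> \<not> lt y x"

definition three_one_free :: "'a set \<Rightarrow> ('a \<Rightarrow> 'a \<Rightarrow> bool) \<Rightarrow> bool" where
  "three_one_free P lt \<longleftrightarrow>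
     \<not> (\<exists>a\<in>P. \<exists>b\<in>P. \<exists>c\<in>P. \<exists>d\<in>P. lt a b \<and> lt b c \<and>
          incomp lt d a \<and> incomp lt d b \<and> incomp lt d c)"

definition down_set :: "'a set \<Rightarrow> ('a \<Rightarrow> 'a \<Rightarrow> bool) \<Rightarrow> 'a \<Rightarrow> 'a set" where
  "down_set P lt a = {x\<in>P. lt x a}"

definition up_set :: "'a set \<Rightarrow> ('a \<Rightarrow> 'a \<Rightarrow> bool) \<Rightarrow> 'a \<Rightarrow> 'a set" where
  "up_set P lt a = {x\<in>P. lt a x}"

definition top_rel :: "'a set \<Rightarrow> ('a \<Rightarrow> 'a \<Rightarrow> bool) \<Rightarrow> 'a \<Rightarrow> 'a \<Rightarrow> bool" where
  "top_rel P lt a b \<longleftrightarrow>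
     \<not> down_set P lt a \<subseteq> down_set P lt b \<and> \<not> down_set P lt b \<subseteq> down_set P lt a"

definition bot_rel :: "'a set \<Rightarrow> ('a \<Rightarrow> 'a \<Rightarrow> bool) \<Rightarrow> 'a \<Rightarrow> 'a \<Rightarrow> bool" where
  "bot_rel P lt a b \<longleftrightarrow>
     \<not> up_set P lt a \<subseteq> up_set P lt b \<and> \<not> up_set P lt b \<subseteq> up_set P lt a"

definition component :: "'a set \<Rightarrow> ('a \<Rightarrow> 'a \<Rightarrow> bool) \<Rightarrow> 'a set \<Rightarrow> bool" where
  "component P E C \<longleftrightarrow>
     (\<exists>v\<in>P. C = {w. (\<lambda>x y. x \<in> P \<and> y \<in> P \<and> E x y)\<^sup>*\<^sup>* v w})"

definition tangle_top :: "'a set \<Rightarrow> ('a \<Rightarrow> 'a \<Rightarrow> bool) \<Rightarrow> 'a set \<Rightarrow> bool" where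
  "tangle_top P lt A \<longleftrightarrow> card A \<ge> 2 \<and> component P (top_rel P lt) A"

definition tangle_bottom :: "'a set \<Rightarrow> ('a \<Rightarrow> 'a \<Rightarrow> bool) \<Rightarrow> 'a set \<Rightarrow> bool" where
  "tangle_bottom P lt B \<longleftrightarrow> card B \<ge> 2 \<and> component P (bot_rel P lt) B"

definition matched :: "('a \<Rightarrow> 'a \<Rightarrow> bool) \<Rightarrow> 'a set \<Rightarrow> 'a set \<Rightarrow> bool" where
  "matched lt A B \<longleftrightarrow>
     (\<exists>a1\<in>A. \<exists>a2\<in>A. \<exists>b1\<in>B. \<exists>b2\<in>B. a1 \<noteq> a2 \<and> b1 \<noteq> b2 \<and>
        lt b1 a1 \<and> lt b2 a2 \<and>
        incomp lt a1 a2 \<and> incomp lt b1 b2 \<and> incomp lt b1 a2 \<and> incomp lt b2 a1)"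

end

theory Submission
  imports Defs
begin

definition quad :: "('a \<Rightarrow> 'a \<Rightarrow> bool) \<Rightarrow> 'a \<Rightarrow> 'a \<Rightarrow> 'a \<Rightarrow> 'a \<Rightarrow> bool" where
  "quad lt a1 a2 b1 b2 \<longleftrightarrow> lt b1 a1 \<and> lt b2 a2 \<and> incomp lt a1 a2 \<and> incomp lt b1 b2 \<and>
     incomp lt b1 a2 \<and> incomp lt b2 a1"

lemma incomp_sym: "incomp lt x y = incomp lt y x"
  unfolding incomp_def by auto

lemma quad_sym: "quad lt a1 a2 b1 b2 = quad lt a2 a1 b2 b1"
  unfolding quad_def using incomp_sym by metis

lemma quad_bot:
  assumes "quad lt a1 a2 b1 b2" "a1 \<in> P" "a2 \<in> P"
  shows "bot_rel P lt b1 b2"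
  using assms unfolding quad_def bot_rel_def up_set_def incomp_def by blast

lemma top_quad:
  assumes sp: "strict_poset P lt" and "a1 \<in> P" "a2 \<in> P" and t: "top_rel P lt a1 a2"
  shows "\<exists>b1\<in>P. \<exists>b2\<in>P. quad lt a1 a2 b1 b2"
proof -
  from t obtain x where x: "x \<in> P" "lt x a1" "\<not> lt x a2"
    unfolding top_rel_def down_set_def by blast
  from t obtain y where y: "y \<in> P" "lt y a2" "\<not> lt y a1"
    unfolding top_rel_def down_set_def by blast
  have irr: "\<And>z. z \<in> P \<Longrightarrow> \<not> lt z z" and tr: "\<And>u v w. u \<in> P \<Longrightarrow> v \<in> P \<Longrightarrow> w \<in> P \<Longrightarrow> lt u v \<Longrightarrow> lt v w \<Longrightarrow> lt u w"
    using sp unfolding strict_poset_def by blast+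
  have "quad lt a1 a2 x y"
    unfolding quad_def incomp_def
  proof (intro conjI)
    show "a1 \<noteq> a2" using x by blast
    show "\<not> lt a1 a2" using tr[of x a1 a2] x assms(2,3) by blast
    show "\<not> lt a2 a1" using tr[of y a2 a1] y assms(2,3) by blast
    show "x \<noteq> y" using x y by blast
    show "\<not> lt x y" using x y tr[of x y a2] assms(2,3) by blast
    show "\<not> lt y x" using x y tr[of y x a1] assms(2,3) by blast
    show "x \<noteq> a2" using x y tr[of y a2 a1] assms(2,3) by blast
    show "\<not> lt x a2" using x by blast
    show "\<not> lt a2 x" using x y tr[of y a2 a1] tr[of a2 x a1] assms(2,3) by blast
    show "y \<noteq> a1" using x y tr[of x a1 a2] assms(2,3) by blast
    show "\<not> lt y a1" using y by blast
    show "\<not> lt a1 y" using x y tr[of x a1 a2] tr[of a1 y a2] assms(2,3) by blast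
  qed (use x y in auto)
  then show ?thesis using x y by blast
qed

abbreviation G :: "'a set \<Rightarrow> ('a \<Rightarrow> 'a \<Rightarrow> bool) \<Rightarrow> 'a \<Rightarrow> 'a \<Rightarrow> bool" where
  "G P E \<equiv> (\<lambda>x y. x \<in> P \<and> y \<in> P \<and> E x y)"

lemma G_sym:
  assumes "\<And>x y. E x y \<Longrightarrow> E y x" and "(G P E)\<^sup>*\<^sup>* x y"
  shows "(G P E)\<^sup>*\<^sup>* y x"
  using assms(2)
proof (induction rule: rtranclp_induct)
  case base then show ?case by simp
next
  case (step y z)
  then have "G P E z y" using assms(1) by blast
  then show ?case using step.IH by (rule converse_rtranclp_into_rtranclp)
qed

lemma G_inP:
  assumes "(G P E)\<^sup>*\<^sup>* x y" "x \<in> P" shows "y \<in> P"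
  using assms by (induction rule: rtranclp_induct) auto

lemma comp_mem:
  assumes sym: "\<And>x y. E x y \<Longrightarrow> E y x" and c: "component P E C" and x: "x \<in> C"
  shows "x \<in> P \<and> C = {w. (G P E)\<^sup>*\<^sup>* x w}"
proof -
  from c obtain v where v: "v \<in> P" "C = {w. (G P E)\<^sup>*\<^sup>* v w}"
    unfolding component_def by blast
  then have vx: "(G P E)\<^sup>*\<^sup>* v x" using x by blast
  have xv: "(G P E)\<^sup>*\<^sup>* x v" using G_sym[OF sym vx] by blast
  have "x \<in> P" using G_inP[OF vx v(1)] .
  moreover have "C = {w. (G P E)\<^sup>*\<^sup>* x w}"
    using v vx xv by (auto intro: rtranclp_trans)
  ultimately show ?thesis by blast
qed

lemma top_sym: "top_rel P lt x y \<Longrightarrow> top_rel P lt y x"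
  unfolding top_rel_def by blast
lemma bot_sym: "bot_rel P lt x y \<Longrightarrow> bot_rel P lt y x"
  unfolding bot_rel_def by blast

lemma lemL:
  assumes q1: "quad lt a a2 b1 b2" and q2: "quad lt a a3 c1 c2"
    and P: "a \<in> P" "a2 \<in> P" "a3 \<in> P" "b1 \<in> P" "b2 \<in> P" "c1 \<in> P" "c2 \<in> P"
  shows "(G P (bot_rel P lt))\<^sup>*\<^sup>* b1 c1"
proof -
  have e1: "bot_rel P lt b1 b2" using quad_bot[OF q1] P by blast
  have e2: "bot_rel P lt c1 c2" using quad_bot[OF q2] P by blast
  show ?thesis
  proof (cases "b1 = c1")
    case True then show ?thesis by simp
  next
    case ne: False
    show ?thesis
    proof (cases "lt c1 a2")
      case False
      have "bot_rel P lt b2 c1"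
        using False q1 q2 P unfolding quad_def bot_rel_def up_set_def incomp_def by blast
      then have s2: "G P (bot_rel P lt) b2 c1" using P by blast
      have s1: "G P (bot_rel P lt) b1 b2" using e1 P by blast
      show ?thesis using converse_rtranclp_into_rtranclp[OF s1 r_into_rtranclp[where r="G P (bot_rel P lt)", OF s2]] .
    next
      case c1a2: True
      show ?thesis
      proof (cases "lt b1 a3")
        case False
        have "bot_rel P lt b1 c2"
          using False q1 q2 P unfolding quad_def bot_rel_def up_set_def incomp_def by blast
        then have s1: "G P (bot_rel P lt) b1 c2" using P by blast
        have s2: "G P (bot_rel P lt) c2 c1" using bot_sym[OF e2] P by blast
        show ?thesis using converse_rtranclp_into_rtranclp[OF s1 r_into_rtranclp[where r="G P (bot_rel P lt)", OF s2]] .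
      next
        case True
        have "bot_rel P lt b1 c1"
          using True c1a2 q1 q2 P unfolding quad_def bot_rel_def up_set_def incomp_def by blast
        then show ?thesis using P by blast
      qed
    qed
  qed
qed

lemma chain:
  assumes sp: "strict_poset P lt"
    and path: "(G P (top_rel P lt))\<^sup>*\<^sup>* a x"
    and q1: "quad lt a a2 b1 b2" and P1: "a \<in> P" "a2 \<in> P" "b1 \<in> P" "b2 \<in> P"
  shows "\<And>y c1 c2. quad lt x y c1 c2 \<Longrightarrow> y \<in> P \<Longrightarrow> c1 \<in> P \<Longrightarrow> c2 \<in> P \<Longrightarrow>
     (G P (bot_rel P lt))\<^sup>*\<^sup>* b1 c1"
  using path
proof (induction rule: rtranclp_induct)
  case base
  then show ?case using lemL[OF q1] P1 by blast
next
  case (step x z y c1 c2)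
  from step.hyps(2) have xz: "x \<in> P" "z \<in> P" "top_rel P lt x z" by auto
  obtain d1 d2 where d: "d1 \<in> P" "d2 \<in> P" "quad lt x z d1 d2"
    using top_quad[OF sp xz] by blast
  have ih: "(G P (bot_rel P lt))\<^sup>*\<^sup>* b1 d1" using step.IH[OF d(3) xz(2) d(1,2)] .
  have e: "bot_rel P lt d1 d2" using quad_bot[OF d(3)] xz by blast
  have l: "(G P (bot_rel P lt))\<^sup>*\<^sup>* d2 c1"
    using lemL[of lt z x d2 d1 y c1 c2 P] d quad_sym step.prems xz by metis
  have s1: "G P (bot_rel P lt) d1 d2" using e d by blast
  have "(G P (bot_rel P lt))\<^sup>*\<^sup>* d1 c1"
    using converse_rtranclp_into_rtranclp[OF s1 l] .
  then show ?case using rtranclp_trans[OF ih] by blast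
qed

lemma matched_quad: "matched lt A B \<longleftrightarrow> (\<exists>a1\<in>A. \<exists>a2\<in>A. \<exists>b1\<in>B. \<exists>b2\<in>B. quad lt a1 a2 b1 b2)"
  unfolding matched_def quad_def incomp_def by blast

lemma main:
  assumes fin: "finite P" and sp: "strict_poset P lt" and tA: "tangle_top P lt A"
  shows "\<exists>!B. tangle_bottom P lt B \<and> matched lt A B"
proof -
  have cA: "component P (top_rel P lt) A" and cardA: "card A \<ge> 2"
    using tA unfolding tangle_top_def by auto
  then obtain v where v: "v \<in> P" "A = {w. (G P (top_rel P lt))\<^sup>*\<^sup>* v w}"
    unfolding component_def by blast
  have vA: "v \<in> A" using v by simp
  obtain w where w: "w \<in> A" "w \<noteq> v"
  proof -
    have "\<not> A \<subseteq> {v}"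
    proof
      assume "A \<subseteq> {v}"
      then have "card A \<le> card {v}" by (intro card_mono) auto
      then show False using cardA by simp
    qed
    then show ?thesis using that by blast
  qed
  have vw: "(G P (top_rel P lt))\<^sup>*\<^sup>* v w" using w v by blast
  then obtain z where z: "(G P (top_rel P lt))\<^sup>*\<^sup>* v z" "G P (top_rel P lt) z w"
    using vw
  proof (cases rule: rtranclp.cases)
    case rtrancl_refl then show ?thesis using w(2) by simp
  next
    case (rtrancl_into_rtrancl z) then show ?thesis using that by blast
  qed
  have zA: "z \<in> A" using z v by blast
  obtain b1 b2 where b: "b1 \<in> P" "b2 \<in> P" "quad lt z w b1 b2"
    using top_quad[OF sp] z(2) by blast
  have eb: "bot_rel P lt b1 b2" using quad_bot[OF b(3)] z(2) by blast
  define B where "B = {u. (G P (bot_rel P lt))\<^sup>*\<^sup>* b1 u}"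
  have b1B: "b1 \<in> B" by (simp add: B_def)
  have s: "G P (bot_rel P lt) b1 b2" using eb b by blast
  have b2B: "b2 \<in> B" unfolding B_def using r_into_rtranclp[where r="G P (bot_rel P lt)", OF s] by simp
  have BP: "B \<subseteq> P" unfolding B_def using G_inP[where P=P and E="bot_rel P lt" and x=b1] b(1) by blast
  have nb: "b1 \<noteq> b2" using b(3) unfolding quad_def incomp_def by blast
  have "card B \<ge> 2"
  proof -
    have "{b1, b2} \<subseteq> B" using b1B b2B by blast
    then have "card {b1,b2} \<le> card B" using BP fin by (meson card_mono finite_subset)
    then show ?thesis using nb by simp
  qed
  then have tB: "tangle_bottom P lt B" unfolding tangle_bottom_def component_def B_def
    using b(1) by blast
  have mB: "matched lt A B" unfolding matched_quad using zA w(1) b1B b2B b(3) by blast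
  show ?thesis
  proof (rule ex1I[of _ B])
    show "tangle_bottom P lt B \<and> matched lt A B" using tB mB by blast
  next
    fix B' assume h: "tangle_bottom P lt B' \<and> matched lt A B'"
    then obtain a1 a2 c1 c2 where c: "a1 \<in> A" "a2 \<in> A" "c1 \<in> B'" "c2 \<in> B'" "quad lt a1 a2 c1 c2"
      unfolding matched_quad by blast
    have cB': "component P (bot_rel P lt) B'" using h unfolding tangle_bottom_def by blast
    have B'eq: "c1 \<in> P \<and> B' = {u. (G P (bot_rel P lt))\<^sup>*\<^sup>* c1 u}"
      using comp_mem[OF bot_sym cB' c(3)] by blast
    have c2P: "c2 \<in> P" using B'eq c(4) G_inP[where P=P and E="bot_rel P lt" and x=c1] by blast
    have AP: "A \<subseteq> P" using v G_inP[where P=P and E="top_rel P lt" and x=v] by blast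
    have za1: "(G P (top_rel P lt))\<^sup>*\<^sup>* z a1"
    proof -
      have "(G P (top_rel P lt))\<^sup>*\<^sup>* z v" using G_sym[OF top_sym z(1)] by blast
      moreover have "(G P (top_rel P lt))\<^sup>*\<^sup>* v a1" using c(1) v by blast
      ultimately show ?thesis by (rule rtranclp_trans)
    qed
    have "(G P (bot_rel P lt))\<^sup>*\<^sup>* b1 c1"
      using chain[OF sp za1 b(3) _ _ b(1,2) c(5)] AP c B'eq c2P zA w(1) by blast
    then have "c1 \<in> B" using B_def by blast
    then have "B = {u. (G P (bot_rel P lt))\<^sup>*\<^sup>* c1 u}"
    proof -
      have cB: "component P (bot_rel P lt) B" using tB unfolding tangle_bottom_def by blast
      show ?thesis using comp_mem[OF bot_sym cB \<open>c1 \<in> B\<close>] by blast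
    qed
    then show "B' = B" using B'eq by simp
  qed
qed

lemma dual_facts:
  fixes lt :: "'a \<Rightarrow> 'a \<Rightarrow> bool"
  defines "lt' \<equiv> (\<lambda>x y. lt y x)"
  shows "strict_poset P lt \<Longrightarrow> strict_poset P lt'"
    and "tangle_top P lt' = tangle_bottom P lt"
    and "tangle_bottom P lt' = tangle_top P lt"
    and "matched lt' A B = matched lt B A"
proof -
  show "strict_poset P lt \<Longrightarrow> strict_poset P lt'"
    unfolding strict_poset_def lt'_def by blast
  have t: "top_rel P lt' = bot_rel P lt" and b: "bot_rel P lt' = top_rel P lt"
    unfolding top_rel_def bot_rel_def down_set_def up_set_def lt'_def by (rule ext)+ simp_all
  show "tangle_top P lt' = tangle_bottom P lt"
    unfolding tangle_top_def tangle_bottom_def t by simp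
  show "tangle_bottom P lt' = tangle_top P lt"
    unfolding tangle_top_def tangle_bottom_def b by simp
  show "matched lt' A B = matched lt B A"
    unfolding matched_def lt'_def incomp_def by blast
qed

theorem proposition2p7:
  fixes P :: "'a set" and lt :: "'a \<Rightarrow> 'a \<Rightarrow> bool"
  assumes "finite P" and "strict_poset P lt" and "three_one_free P lt"
  shows "(\<forall>A. tangle_top P lt A \<longrightarrow> (\<exists>!B. tangle_bottom P lt B \<and> matched lt A B)) \<and>
         (\<forall>B. tangle_bottom P lt B \<longrightarrow> (\<exists>!A. tangle_top P lt A \<and> matched lt A B))"
proof (intro conjI allI impI)
  fix A assume "tangle_top P lt A"
  then show "\<exists>!B. tangle_bottom P lt B \<and> matched lt A B" using main assms(1,2) by blast
next
  fix B assume "tangle_bottom P lt B"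
  then have "tangle_top P (\<lambda>x y. lt y x) B" using dual_facts by metis
  then have "\<exists>!A. tangle_bottom P (\<lambda>x y. lt y x) A \<and> matched (\<lambda>x y. lt y x) B A"
    using main[OF assms(1) dual_facts(1)[OF assms(2)]] by blast
  then show "\<exists>!A. tangle_top P lt A \<and> matched lt A B" using dual_facts by metis
qed

end
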